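(* Let $\mathcal{C}$ be an idempotent complete preadditive category that has weak kernels and weak cokernels, and let $n$ be a nonnegative integer. Then $\mathcal{C}$ has $n$-kernels if and only if $\mathcal{C}$ has $n$-cokernels.
   Context: A preadditive category is idempotent complete if every idempotent $e : X \to X$ splits, i.e. there are morphisms $f : Y \to X$ and $g : X \to Y$ with $fg = e$ and $gf = 1_Y$. A weak kernel of $f : A \to B$ is a morphism $k : K \to A$ with $fk = 0$ such that every $u : U \to A$ with $fu = 0$ factors (not necessarily uniquely) as $u = kv$; weak cokernels are defined dually. $\mathcal{C}$ has weak kernels (resp. weak cokernels) if every morphism has one. For $n \geqslant 1$: an $n$-kernel of a morphism $f : A \to A'$ is a sequence of morphisms $B_1 \xrightarrow{b_1} B_2 \xrightarrow{b_2} \cdots \xrightarrow{b_{n-1}} B_n \xrightarrow{b_n} A$ such that for every object $X$ the sequence of abelian groups $0 \to \mathcal{C}(X,B_1) \to \cdots \to \mathcal{C}(X,B_n) \to \mathcal{C}(X,A) \to \mathcal{C}(X,A')$ (induced by composition) is exact; equivalently, $b_1$ is a monomorphism, $b_i$ is a weak kernel of $b_{i+1}$ for $1 \leqslant i \leqslant n-1$, and $b_n$ is a weak kernel of $f$. Dually, an $n$-cokernel of $f : A \to A'$ is a sequence $A' \xrightarrow{c_0} C_1 \xrightarrow{c_1} \cdots \xrightarrow{c_{n-1}} C_n$ such that for every object $X$ the sequence $0 \to \mathcal{C}(C_n,X) \to \cdots \to \mathcal{C}(C_1,X) \to \mathcal{C}(A',X) \to \mathcal{C}(A,X)$ is exact;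 equivalently, $c_{n-1}$ is an epimorphism, $c_0$ is a weak cokernel of $f$ and $c_i$ is a weak cokernel of $c_{i-1}$ for $1 \leqslant i \leqslant n-1$. For $n = 0$: a $0$-kernel of $f : A \to A'$ is a monomorphism $b : B \to A'$ such that $f = bc$ for some split epimorphism $c : A \to B$; a $0$-cokernel of $f$ is an epimorphism $e : A \to C$ such that $f = se$ for some split monomorphism $s : C \to A'$. $\mathcal{C}$ has $n$-kernels (resp. $n$-cokernels) if every morphism in $\mathcal{C}$ has an $n$-kernel (resp. $n$-cokernel). *)

theory Defs
  imports "HOL-Algebra.Group"
begin

text \<open>A (small, set-based) category with abelian-group-enriched hom-sets.
  Objects have type 'o, morphisms type 'm. cat_comp C g f is the composite g after f.\<close>

record ('o, 'm) precat =
  cat_ob   :: "'o set"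
  cat_hom  :: "'o \<Rightarrow> 'o \<Rightarrow> 'm set"
  cat_comp :: "'m \<Rightarrow> 'm \<Rightarrow> 'm"
  cat_id   :: "'o \<Rightarrow> 'm"
  cat_add  :: "'m \<Rightarrow> 'm \<Rightarrow> 'm"
  cat_zero :: "'o \<Rightarrow> 'o \<Rightarrow> 'm"

definition hom_group :: "('o, 'm) precat \<Rightarrow> 'o \<Rightarrow> 'o \<Rightarrow> 'm monoid" where
  "hom_group C A B = \<lparr>carrier = cat_hom C A B, monoid.mult = cat_add C, one = cat_zero C A B\<rparr>"

definition preadditive :: "('o, 'm) precat \<Rightarrow> bool" where
  "preadditive C \<longleftrightarrow>
     (\<forall>A B. (A \<notin> cat_ob C \<or> B \<notin> cat_ob C) \<longrightarrow> cat_hom C A B = {}) \<and>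
     (\<forall>A B A' B' f. f \<in> cat_hom C A B \<and> f \<in> cat_hom C A' B' \<longrightarrow> A = A' \<and> B = B') \<and>
     (\<forall>A B D f g. f \<in> cat_hom C A B \<and> g \<in> cat_hom C B D \<longrightarrow> cat_comp C g f \<in> cat_hom C A D) \<and>
     (\<forall>A B D E f g h. f \<in> cat_hom C A B \<and> g \<in> cat_hom C B D \<and> h \<in> cat_hom C D E \<longrightarrow>
        cat_comp C h (cat_comp C g f) = cat_comp C (cat_comp C h g) f) \<and>
     (\<forall>A \<in> cat_ob C. cat_id C A \<in> cat_hom C A A) \<and>
     (\<forall>A B f. f \<in> cat_hom C A B \<longrightarrow> cat_comp C (cat_id C B) f = f \<and> cat_comp C f (cat_id C A) = f) \<and>
     (\<forall>A \<in> cat_ob C. \<forall>B \<in> cat_ob C. comm_group (hom_group C A B)) \<and>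
     (\<forall>A B D f f' g. f \<in> cat_hom C A B \<and> f' \<in> cat_hom C A B \<and> g \<in> cat_hom C B D \<longrightarrow>
        cat_comp C g (cat_add C f f') = cat_add C (cat_comp C g f) (cat_comp C g f')) \<and>
     (\<forall>A B D f g g'. f \<in> cat_hom C A B \<and> g \<in> cat_hom C B D \<and> g' \<in> cat_hom C B D \<longrightarrow>
        cat_comp C (cat_add C g g') f = cat_add C (cat_comp C g f) (cat_comp C g' f))"

definition cat_mono :: "('o, 'm) precat \<Rightarrow> 'o \<Rightarrow> 'o \<Rightarrow> 'm \<Rightarrow> bool" where
  "cat_mono C A B f \<longleftrightarrow> f \<in> cat_hom C A B \<and>
     (\<forall>X \<in> cat_ob C. \<forall>u \<in> cat_hom C X A. \<forall>v \<in> cat_hom C X A.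
        cat_comp C f u = cat_comp C f v \<longrightarrow> u = v)"

definition cat_epi :: "('o, 'm) precat \<Rightarrow> 'o \<Rightarrow> 'o \<Rightarrow> 'm \<Rightarrow> bool" where
  "cat_epi C A B f \<longleftrightarrow> f \<in> cat_hom C A B \<and>
     (\<forall>X \<in> cat_ob C. \<forall>u \<in> cat_hom C B X. \<forall>v \<in> cat_hom C B X.
        cat_comp C u f = cat_comp C v f \<longrightarrow> u = v)"

definition split_epi :: "('o, 'm) precat \<Rightarrow> 'o \<Rightarrow> 'o \<Rightarrow> 'm \<Rightarrow> bool" where
  "split_epi C A B f \<longleftrightarrow> f \<in> cat_hom C A B \<and>
     (\<exists>s \<in> cat_hom C B A. cat_comp C f s = cat_id C B)"

definition split_mono :: "('o, 'm) precat \<Rightarrow> 'o \<Rightarrow> 'o \<Rightarrow> 'm \<Rightarrow> bool" where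
  "split_mono C A B f \<longleftrightarrow> f \<in> cat_hom C A B \<and>
     (\<exists>r \<in> cat_hom C B A. cat_comp C r f = cat_id C A)"

definition idempotent_complete :: "('o, 'm) precat \<Rightarrow> bool" where
  "idempotent_complete C \<longleftrightarrow>
     (\<forall>X \<in> cat_ob C. \<forall>e \<in> cat_hom C X X. cat_comp C e e = e \<longrightarrow>
        (\<exists>Y \<in> cat_ob C. \<exists>f \<in> cat_hom C Y X. \<exists>g \<in> cat_hom C X Y.
           cat_comp C f g = e \<and> cat_comp C g f = cat_id C Y))"

definition weak_kernel :: "('o, 'm) precat \<Rightarrow> 'o \<Rightarrow> 'o \<Rightarrow> 'm \<Rightarrow> 'o \<Rightarrow> 'm \<Rightarrow> bool" where
  "weak_kernel C A B f K k \<longleftrightarrow> K \<in> cat_ob C \<and> k \<in> cat_hom C K A \<and>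
     cat_comp C f k = cat_zero C K B \<and>
     (\<forall>U \<in> cat_ob C. \<forall>u \<in> cat_hom C U A. cat_comp C f u = cat_zero C U B \<longrightarrow>
        (\<exists>v \<in> cat_hom C U K. u = cat_comp C k v))"

definition weak_cokernel :: "('o, 'm) precat \<Rightarrow> 'o \<Rightarrow> 'o \<Rightarrow> 'm \<Rightarrow> 'o \<Rightarrow> 'm \<Rightarrow> bool" where
  "weak_cokernel C A B f Q c \<longleftrightarrow> Q \<in> cat_ob C \<and> c \<in> cat_hom C B Q \<and>
     cat_comp C c f = cat_zero C A Q \<and>
     (\<forall>U \<in> cat_ob C. \<forall>u \<in> cat_hom C B U. cat_comp C u f = cat_zero C A U \<longrightarrow>
        (\<exists>v \<in> cat_hom C Q U. u = cat_comp C v c))"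

definition has_weak_kernels :: "('o, 'm) precat \<Rightarrow> bool" where
  "has_weak_kernels C \<longleftrightarrow> (\<forall>A \<in> cat_ob C. \<forall>B \<in> cat_ob C. \<forall>f \<in> cat_hom C A B.
      \<exists>K k. weak_kernel C A B f K k)"

definition has_weak_cokernels :: "('o, 'm) precat \<Rightarrow> bool" where
  "has_weak_cokernels C \<longleftrightarrow> (\<forall>A \<in> cat_ob C. \<forall>B \<in> cat_ob C. \<forall>f \<in> cat_hom C A B.
      \<exists>Q c. weak_cokernel C A B f Q c)"

text \<open>n-kernel of f : A -> A' (n >= 1): objects B 1..B n and maps b i : B i -> B (i+1)
  (with B (n+1) read as A), such that for every X the sequence
  0 -> C(X,B 1) -> ... -> C(X,B n) -> C(X,A) -> C(X,A') is exact.\<close>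
definition is_n_kernel ::
  "('o, 'm) precat \<Rightarrow> nat \<Rightarrow> 'o \<Rightarrow> 'o \<Rightarrow> 'm \<Rightarrow> (nat \<Rightarrow> 'o) \<Rightarrow> (nat \<Rightarrow> 'm) \<Rightarrow> bool" where
  "is_n_kernel C n A A' f B b \<longleftrightarrow>
   (if n = 0 then
      B 0 \<in> cat_ob C \<and> cat_mono C (B 0) A' (b 0) \<and>
      (\<exists>c. split_epi C A (B 0) c \<and> f = cat_comp C (b 0) c)
    else
      (let Bx = (\<lambda>i. if i = n + 1 then A else if i = n + 2 then A' else B i);
           bx = (\<lambda>i. if i = n + 1 then f else b i)
       in (\<forall>i \<in> {1..n}. B i \<in> cat_ob C \<and> b i \<in> cat_hom C (B i) (Bx (Suc i))) \<and>
          (\<forall>X \<in> cat_ob C. \<forall>u \<in> cat_hom C X (B 1).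
             cat_comp C (b 1) u = cat_zero C X (Bx 2) \<longrightarrow> u = cat_zero C X (B 1)) \<and>
          (\<forall>X \<in> cat_ob C. \<forall>i \<in> {2..n+1}. \<forall>u \<in> cat_hom C X (Bx i).
             cat_comp C (bx i) u = cat_zero C X (Bx (Suc i)) \<longleftrightarrow>
             (\<exists>v \<in> cat_hom C X (B (i - 1)). u = cat_comp C (b (i - 1)) v))))"

text \<open>n-cokernel of f : A -> A' (n >= 1): objects C' 1..C' n and maps c i : C' i -> C' (i+1)
  for i = 0..n-1 (with C' 0 read as A'), such that for every X the sequence
  0 -> C(C' n,X) -> ... -> C(C' 1,X) -> C(A',X) -> C(A,X) is exact.\<close>
definition is_n_cokernel ::
  "('o, 'm) precat \<Rightarrow> nat \<Rightarrow> 'o \<Rightarrow> 'o \<Rightarrow> 'm \<Rightarrow> (nat \<Rightarrow> 'o) \<Rightarrow> (nat \<Rightarrow> 'm) \<Rightarrow> bool" where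
  "is_n_cokernel C n A A' f Q c \<longleftrightarrow>
   (if n = 0 then
      Q 0 \<in> cat_ob C \<and> cat_epi C A (Q 0) (c 0) \<and>
      (\<exists>s. split_mono C (Q 0) A' s \<and> f = cat_comp C s (c 0))
    else
      (let Qx = (\<lambda>i. if i = 0 then A' else Q i);
           fx = (\<lambda>i. if i = 0 then f else c (i - 1));
           sx = (\<lambda>i. if i = 0 then A else Qx (i - 1))
       in (\<forall>i \<in> {1..n}. Q i \<in> cat_ob C) \<and>
          (\<forall>i < n. c i \<in> cat_hom C (Qx i) (Q (Suc i))) \<and>
          (\<forall>X \<in> cat_ob C. \<forall>u \<in> cat_hom C (Q n) X.
             cat_comp C u (c (n - 1)) = cat_zero C (Qx (n - 1)) X \<longrightarrow> u = cat_zero C (Q n) X) \<and>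
          (\<forall>X \<in> cat_ob C. \<forall>i < n. \<forall>u \<in> cat_hom C (Qx i) X.
             cat_comp C u (fx i) = cat_zero C (sx i) X \<longleftrightarrow>
             (\<exists>v \<in> cat_hom C (Q (Suc i)) X. u = cat_comp C v (c i)))))"

definition has_n_kernels :: "('o, 'm) precat \<Rightarrow> nat \<Rightarrow> bool" where
  "has_n_kernels C n \<longleftrightarrow> (\<forall>A \<in> cat_ob C. \<forall>A' \<in> cat_ob C. \<forall>f \<in> cat_hom C A A'.
      \<exists>B b. is_n_kernel C n A A' f B b)"

definition has_n_cokernels :: "('o, 'm) precat \<Rightarrow> nat \<Rightarrow> bool" where
  "has_n_cokernels C n \<longleftrightarrow> (\<forall>A \<in> cat_ob C. \<forall>A' \<in> cat_ob C. \<forall>f \<in> cat_hom C A A'.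
      \<exists>Q c. is_n_cokernel C n A A' f Q c)"

end

theory Submission
  imports Defs
begin


locale preadd =
  fixes C :: "('o, 'm) precat"
  assumes pa: "preadditive C"
begin

abbreviation ob where "ob \<equiv> cat_ob C"
abbreviation hom where "hom \<equiv> cat_hom C"
abbreviation comp (infixl "\<cdot>" 70) where "g \<cdot> f \<equiv> cat_comp C g f"
abbreviation add (infixl "\<uplus>" 65) where "f \<uplus> g \<equiv> cat_add C f g"
abbreviation Z where "Z \<equiv> cat_zero C"
abbreviation idm where "idm \<equiv> cat_id C"

definition neg where "neg A B f = inv\<^bsub>hom_group C A B\<^esub> f"

lemma hom_ob: "f \<in> hom A B \<Longrightarrow> A \<in> ob \<and> B \<in> ob"
proof -
  have "\<forall>A B. (A \<notin> ob \<or> B \<notin> ob) \<longrightarrow> hom A B = {}" using pa unfolding preadditive_def by (elim conjE)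
  then show "f \<in> hom A B \<Longrightarrow> A \<in> ob \<and> B \<in> ob" by blast
qed

lemma comp_hom[intro]: "f \<in> hom A B \<Longrightarrow> g \<in> hom B D \<Longrightarrow> g \<cdot> f \<in> hom A D"
proof -
  have "\<forall>A B D f g. f \<in> hom A B \<and> g \<in> hom B D \<longrightarrow> g \<cdot> f \<in> hom A D" using pa unfolding preadditive_def by (elim conjE)
  then show "f \<in> hom A B \<Longrightarrow> g \<in> hom B D \<Longrightarrow> g \<cdot> f \<in> hom A D" by blast
qed

lemma assoc: "f \<in> hom A B \<Longrightarrow> g \<in> hom B D \<Longrightarrow> h \<in> hom D E \<Longrightarrow> h \<cdot> (g \<cdot> f) = (h \<cdot> g) \<cdot> f"
proof -
  have "\<forall>A B D E f g h. f \<in> hom A B \<and> g \<in> hom B D \<and> h \<in> hom D E \<longrightarrow>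
        h \<cdot> (g \<cdot> f) = (h \<cdot> g) \<cdot> f" using pa unfolding preadditive_def by (elim conjE)
  then show "f \<in> hom A B \<Longrightarrow> g \<in> hom B D \<Longrightarrow> h \<in> hom D E \<Longrightarrow> h \<cdot> (g \<cdot> f) = (h \<cdot> g) \<cdot> f" by blast
qed

lemma id_hom[intro]: "A \<in> ob \<Longrightarrow> idm A \<in> hom A A"
proof -
  have "\<forall>A \<in> ob. idm A \<in> hom A A" using pa unfolding preadditive_def by (elim conjE)
  then show "A \<in> ob \<Longrightarrow> idm A \<in> hom A A" by blast
qed

lemma idlr: "\<forall>A B f. f \<in> hom A B \<longrightarrow> idm B \<cdot> f = f \<and> f \<cdot> idm A = f"
  using pa unfolding preadditive_def by (elim conjE)

lemma idl[simp]: "f \<in> hom A B \<Longrightarrow> idm B \<cdot> f = f"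
  using idlr by blast

lemma idr[simp]: "f \<in> hom A B \<Longrightarrow> f \<cdot> idm A = f"
  using idlr by blast

lemma grp0: "\<forall>A \<in> ob. \<forall>B \<in> ob. comm_group (hom_group C A B)"
  using pa unfolding preadditive_def by (elim conjE)

lemma grp: "A \<in> ob \<Longrightarrow> B \<in> ob \<Longrightarrow> comm_group (hom_group C A B)"
  using grp0 by blast

lemma distl0: "\<forall>A B D f f' g. f \<in> hom A B \<and> f' \<in> hom A B \<and> g \<in> hom B D \<longrightarrow>
        g \<cdot> (f \<uplus> f') = g \<cdot> f \<uplus> g \<cdot> f'"
  using pa unfolding preadditive_def by (elim conjE)

lemma distl: "f \<in> hom A B \<Longrightarrow> f' \<in> hom A B \<Longrightarrow> g \<in> hom B D \<Longrightarrow> g \<cdot> (f \<uplus> f') = g \<cdot> f \<uplus> g \<cdot> f'"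
  using distl0 by blast

lemma distr0: "\<forall>A B D f g g'. f \<in> hom A B \<and> g \<in> hom B D \<and> g' \<in> hom B D \<longrightarrow>
        (g \<uplus> g') \<cdot> f = g \<cdot> f \<uplus> g' \<cdot> f"
  using pa unfolding preadditive_def by (elim conjE)

lemma distr: "f \<in> hom A B \<Longrightarrow> g \<in> hom B D \<Longrightarrow> g' \<in> hom B D \<Longrightarrow> (g \<uplus> g') \<cdot> f = g \<cdot> f \<uplus> g' \<cdot> f"
  using distr0 by blast

lemma hg_simps[simp]: "carrier (hom_group C A B) = hom A B" "monoid.mult (hom_group C A B) = cat_add C"
  "one (hom_group C A B) = Z A B"
  by (simp_all add: hom_group_def)

lemma zero_hom[intro]: "A \<in> ob \<Longrightarrow> B \<in> ob \<Longrightarrow> Z A B \<in> hom A B"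
proof -
  assume "A \<in> ob" "B \<in> ob"
  then interpret G: comm_group "hom_group C A B" by (rule grp)
  show ?thesis using G.one_closed by simp
qed

lemma add_hom[intro]: "f \<in> hom A B \<Longrightarrow> g \<in> hom A B \<Longrightarrow> f \<uplus> g \<in> hom A B"
proof -
  assume a: "f \<in> hom A B" "g \<in> hom A B"
  have o: "A \<in> ob" "B \<in> ob" using hom_ob a by auto
  interpret G: comm_group "hom_group C A B" by (rule grp[OF o])
  show ?thesis using G.m_closed[of f g] a by simp
qed

lemma neg_hom[intro]: "f \<in> hom A B \<Longrightarrow> neg A B f \<in> hom A B"
proof -
  assume a: "f \<in> hom A B"
  have o: "A \<in> ob" "B \<in> ob" using hom_ob a by auto
  interpret G: comm_group "hom_group C A B" by (rule grp[OF o])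
  show ?thesis using G.inv_closed[of f] a by (simp add: neg_def)
qed

lemma add_zero_r[simp]: "f \<in> hom A B \<Longrightarrow> f \<uplus> Z A B = f"
proof -
  assume a: "f \<in> hom A B"
  have o: "A \<in> ob" "B \<in> ob" using hom_ob a by auto
  interpret G: comm_group "hom_group C A B" by (rule grp[OF o])
  show ?thesis using G.r_one[of f] a by simp
qed

lemma add_zero_l[simp]: "f \<in> hom A B \<Longrightarrow> Z A B \<uplus> f = f"
proof -
  assume a: "f \<in> hom A B"
  have o: "A \<in> ob" "B \<in> ob" using hom_ob a by auto
  interpret G: comm_group "hom_group C A B" by (rule grp[OF o])
  show ?thesis using G.l_one[of f] a by simp
qed

lemma add_neg[simp]: "f \<in> hom A B \<Longrightarrow> f \<uplus> neg A B f = Z A B"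
proof -
  assume a: "f \<in> hom A B"
  have o: "A \<in> ob" "B \<in> ob" using hom_ob a by auto
  interpret G: comm_group "hom_group C A B" by (rule grp[OF o])
  show ?thesis using G.r_inv[of f] a by (simp add: neg_def)
qed

lemma self_add: "f \<in> hom A B \<Longrightarrow> f \<uplus> f = f \<Longrightarrow> f = Z A B"
proof -
  assume a: "f \<in> hom A B" "f \<uplus> f = f"
  have o: "A \<in> ob" "B \<in> ob" using hom_ob a by auto
  interpret G: comm_group "hom_group C A B" by (rule grp[OF o])
  have "(f \<uplus> f = f) = (f = Z A B)" using G.l_cancel_one[of f f] a(1) by (simp only: hg_simps)
  then show ?thesis using a(2) by blast
qed

lemma sub_eq: "a \<in> hom A B \<Longrightarrow> b \<in> hom A B \<Longrightarrow> c \<in> hom A B \<Longrightarrow> a \<uplus> neg A B b = c \<Longrightarrow> a = c \<uplus> b"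
proof -
  assume a: "a \<in> hom A B" "b \<in> hom A B" "c \<in> hom A B" "a \<uplus> neg A B b = c"
  have o: "A \<in> ob" "B \<in> ob" using hom_ob a by auto
  interpret G: comm_group "hom_group C A B" by (rule grp[OF o])
  have nb: "neg A B b \<in> hom A B" using a(2) by (rule neg_hom)
  have li: "neg A B b \<uplus> b = Z A B" using G.l_inv[of b] a(2) by (simp only: hg_simps neg_def)
  have "c \<uplus> b = (a \<uplus> neg A B b) \<uplus> b" using a(4) by (rule arg_cong[symmetric])
  also have "\<dots> = a \<uplus> (neg A B b \<uplus> b)" using G.m_assoc[of a "neg A B b" b] a(1,2) nb by (simp only: hg_simps)
  also have "\<dots> = a" using li a(1) by simp
  finally show ?thesis by (rule sym)
qed

lemma sub_zero: "a \<in> hom A B \<Longrightarrow> b \<in> hom A B \<Longrightarrow> a \<uplus> neg A B b = Z A B \<Longrightarrow> a = b"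
  using sub_eq[of a A B b "Z A B"] zero_hom hom_ob by auto

lemma comp_zero_r[simp]: "g \<in> hom B D \<Longrightarrow> A \<in> ob \<Longrightarrow> g \<cdot> Z A B = Z A D"
proof -
  assume a: "g \<in> hom B D" "A \<in> ob"
  have B: "B \<in> ob" "D \<in> ob" using a hom_ob by auto
  have z: "Z A B \<in> hom A B" using a B by auto
  have "g \<cdot> Z A B = g \<cdot> (Z A B \<uplus> Z A B)" using z by simp
  also have "\<dots> = g \<cdot> Z A B \<uplus> g \<cdot> Z A B" using distl z a by blast
  finally show ?thesis using self_add[of "g \<cdot> Z A B" A D] z a by auto
qed

lemma comp_zero_l[simp]: "f \<in> hom A B \<Longrightarrow> D \<in> ob \<Longrightarrow> Z B D \<cdot> f = Z A D"
proof -
  assume a: "f \<in> hom A B" "D \<in> ob"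
  have B: "A \<in> ob" "B \<in> ob" using a hom_ob by auto
  have z: "Z B D \<in> hom B D" using a B by auto
  have "Z B D \<cdot> f = (Z B D \<uplus> Z B D) \<cdot> f" using z by simp
  also have "\<dots> = Z B D \<cdot> f \<uplus> Z B D \<cdot> f" using distr z a by blast
  finally show ?thesis using self_add[of "Z B D \<cdot> f" A D] z a by auto
qed

lemma neg_unique: "a \<in> hom A B \<Longrightarrow> b \<in> hom A B \<Longrightarrow> a \<uplus> b = Z A B \<Longrightarrow> b = neg A B a"
proof -
  assume a: "a \<in> hom A B" "b \<in> hom A B" "a \<uplus> b = Z A B"
  have o: "A \<in> ob" "B \<in> ob" using hom_ob a by auto
  interpret G: comm_group "hom_group C A B" by (rule grp[OF o])
  have "b \<uplus> a = Z A B" using a G.m_comm[of a b] by simp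
  then have "inv\<^bsub>hom_group C A B\<^esub> a = b" using G.inv_equality[of b a] a(1,2) by (simp only: hg_simps)
  then show ?thesis by (simp add: neg_def)
qed

lemma neg_comp_l: "w \<in> hom A B \<Longrightarrow> g \<in> hom A' A \<Longrightarrow> neg A B w \<cdot> g = neg A' B (w \<cdot> g)"
proof -
  assume a: "w \<in> hom A B" "g \<in> hom A' A"
  have o: "A' \<in> ob" "B \<in> ob" using a hom_ob by auto
  have "w \<cdot> g \<uplus> neg A B w \<cdot> g = (w \<uplus> neg A B w) \<cdot> g" using distr[OF a(2) a(1) neg_hom[OF a(1)]] by simp
  also have "\<dots> = Z A' B" using a o by simp
  finally show ?thesis using neg_unique a by blast
qed

lemma neg_comp_r: "w \<in> hom A B \<Longrightarrow> g \<in> hom B D \<Longrightarrow> g \<cdot> neg A B w = neg A D (g \<cdot> w)"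
proof -
  assume a: "w \<in> hom A B" "g \<in> hom B D"
  have o: "A \<in> ob" "D \<in> ob" using a hom_ob by auto
  have "g \<cdot> w \<uplus> g \<cdot> neg A B w = g \<cdot> (w \<uplus> neg A B w)" using distl[OF a(1) neg_hom[OF a(1)] a(2)] by simp
  also have "\<dots> = Z A D" using a o by simp
  finally show ?thesis using neg_unique a by blast
qed

lemma neg_zero[simp]: "A \<in> ob \<Longrightarrow> B \<in> ob \<Longrightarrow> neg A B (Z A B) = Z A B"
  using neg_unique[of "Z A B" A B "Z A B"] zero_hom by auto


lemma hom_uniq: "f \<in> hom A B \<Longrightarrow> f \<in> hom A' B' \<Longrightarrow> A = A' \<and> B = B'"
proof -
  have "\<forall>A B A' B' f. f \<in> hom A B \<and> f \<in> hom A' B' \<longrightarrow> A = A' \<and> B = B'"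
    using pa unfolding preadditive_def by (elim conjE)
  then show "f \<in> hom A B \<Longrightarrow> f \<in> hom A' B' \<Longrightarrow> A = A' \<and> B = B'" by blast
qed

end

definition kBx :: "nat \<Rightarrow> 'o \<Rightarrow> 'o \<Rightarrow> (nat \<Rightarrow> 'o) \<Rightarrow> nat \<Rightarrow> 'o" where
  "kBx n A A' B i = (if i = n + 1 then A else if i = n + 2 then A' else B i)"
definition kbx :: "nat \<Rightarrow> 'm \<Rightarrow> (nat \<Rightarrow> 'm) \<Rightarrow> nat \<Rightarrow> 'm" where
  "kbx n f b i = (if i = n + 1 then f else b i)"

lemma is_n_kernel_pos: "n \<noteq> 0 \<Longrightarrow> is_n_kernel C n A A' f B b =
  ((\<forall>i \<in> {1..n}. B i \<in> cat_ob C \<and> b i \<in> cat_hom C (B i) (kBx n A A' B (Suc i))) \<and>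
   (\<forall>X \<in> cat_ob C. \<forall>u \<in> cat_hom C X (B 1).
      cat_comp C (b 1) u = cat_zero C X (kBx n A A' B 2) \<longrightarrow> u = cat_zero C X (B 1)) \<and>
   (\<forall>X \<in> cat_ob C. \<forall>i \<in> {2..n+1}. \<forall>u \<in> cat_hom C X (kBx n A A' B i).
      cat_comp C (kbx n f b i) u = cat_zero C X (kBx n A A' B (Suc i)) \<longleftrightarrow>
      (\<exists>v \<in> cat_hom C X (B (i - 1)). u = cat_comp C (b (i - 1)) v)))"
  unfolding is_n_kernel_def Let_def kBx_def kbx_def by simp

definition cQx :: "'o \<Rightarrow> (nat \<Rightarrow> 'o) \<Rightarrow> nat \<Rightarrow> 'o" where
  "cQx A' Q i = (if i = 0 then A' else Q i)"
definition cfx :: "'m \<Rightarrow> (nat \<Rightarrow> 'm) \<Rightarrow> nat \<Rightarrow> 'm" where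
  "cfx f c i = (if i = 0 then f else c (i - 1))"
definition csx :: "'o \<Rightarrow> 'o \<Rightarrow> (nat \<Rightarrow> 'o) \<Rightarrow> nat \<Rightarrow> 'o" where
  "csx A A' Q i = (if i = 0 then A else cQx A' Q (i - 1))"

lemma is_n_cokernel_pos: "n \<noteq> 0 \<Longrightarrow> is_n_cokernel C n A A' f Q c =
  ((\<forall>i \<in> {1..n}. Q i \<in> cat_ob C) \<and>
   (\<forall>i < n. c i \<in> cat_hom C (cQx A' Q i) (Q (Suc i))) \<and>
   (\<forall>X \<in> cat_ob C. \<forall>u \<in> cat_hom C (Q n) X.
      cat_comp C u (c (n - 1)) = cat_zero C (cQx A' Q (n - 1)) X \<longrightarrow> u = cat_zero C (Q n) X) \<and>
   (\<forall>X \<in> cat_ob C. \<forall>i < n. \<forall>u \<in> cat_hom C (cQx A' Q i) X.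
      cat_comp C u (cfx f c i) = cat_zero C (csx A A' Q i) X \<longleftrightarrow>
      (\<exists>v \<in> cat_hom C (Q (Suc i)) X. u = cat_comp C v (c i))))"
  unfolding is_n_cokernel_def Let_def cQx_def cfx_def csx_def by simp

definition op_cat :: "('o, 'm) precat \<Rightarrow> ('o, 'm) precat" where
  "op_cat C = \<lparr>cat_ob = cat_ob C, cat_hom = (\<lambda>A B. cat_hom C B A), cat_comp = (\<lambda>g f. cat_comp C f g),
     cat_id = cat_id C, cat_add = cat_add C, cat_zero = (\<lambda>A B. cat_zero C B A)\<rparr>"

lemma op_simps[simp]: "cat_ob (op_cat C) = cat_ob C" "cat_hom (op_cat C) A B = cat_hom C B A"
  "cat_comp (op_cat C) g f = cat_comp C f g" "cat_id (op_cat C) = cat_id C"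
  "cat_add (op_cat C) = cat_add C" "cat_zero (op_cat C) A B = cat_zero C B A"
  by (simp_all add: op_cat_def)

lemma op_op[simp]: "op_cat (op_cat C) = C"
  by (cases C) (simp add: op_cat_def)

lemma hom_group_op[simp]: "hom_group (op_cat C) A B = hom_group C B A"
  by (simp add: hom_group_def)

lemma (in preadd) preadditive_op: "preadditive (op_cat C)"
  unfolding preadditive_def op_simps hom_group_op
apply (intro conjI)
  subgoal using hom_ob by blast
  subgoal using hom_uniq by blast
  subgoal using comp_hom by blast
  subgoal using assoc by metis
  subgoal using id_hom by blast
  subgoal using idl idr by blast
  subgoal using grp by blast
  subgoal using distr by blast
  subgoal using distl by blast
  done


lemma idempotent_complete_op: "idempotent_complete C \<Longrightarrow> idempotent_complete (op_cat C)"
  unfolding idempotent_complete_def op_simps by metis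

lemma weak_kernel_op: "weak_kernel (op_cat C) A B f K k = weak_cokernel C B A f K k"
  unfolding weak_kernel_def weak_cokernel_def op_simps by simp

lemma weak_cokernel_op: "weak_cokernel (op_cat C) A B f K k = weak_kernel C B A f K k"
  unfolding weak_kernel_def weak_cokernel_def op_simps by simp

lemma has_weak_cokernels_op: "has_weak_kernels C \<Longrightarrow> has_weak_cokernels (op_cat C)"
  unfolding has_weak_kernels_def has_weak_cokernels_def weak_cokernel_op op_simps by blast


lemma cok_to_ker:
  assumes H: "is_n_cokernel D n A A' f Q c"
  shows "is_n_kernel (op_cat D) n A' A f (if n = 0 then Q else (\<lambda>i. Q (n + 1 - i)))
           (if n = 0 then c else (\<lambda>i. c (n - i)))"
proof (cases "n = 0")
  case True
  then show ?thesis using H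
    unfolding is_n_kernel_def is_n_cokernel_def cat_mono_def cat_epi_def split_epi_def split_mono_def
    by simp
next
  case False
  define B where "B = (\<lambda>i. Q (n + 1 - i))"
  define b where "b = (\<lambda>i. c (n - i))"
  have H': "(\<forall>i \<in> {1..n}. Q i \<in> cat_ob D) \<and>
   (\<forall>i < n. c i \<in> cat_hom D (cQx A' Q i) (Q (Suc i))) \<and>
   (\<forall>X \<in> cat_ob D. \<forall>u \<in> cat_hom D (Q n) X.
      cat_comp D u (c (n - 1)) = cat_zero D (cQx A' Q (n - 1)) X \<longrightarrow> u = cat_zero D (Q n) X) \<and>
   (\<forall>X \<in> cat_ob D. \<forall>i < n. \<forall>u \<in> cat_hom D (cQx A' Q i) X.
      cat_comp D u (cfx f c i) = cat_zero D (csx A A' Q i) X \<longleftrightarrow>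
      (\<exists>v \<in> cat_hom D (Q (Suc i)) X. u = cat_comp D v (c i)))"
    using H unfolding is_n_cokernel_pos[OF False] by simp
  then have H1: "\<And>i. 1 \<le> i \<Longrightarrow> i \<le> n \<Longrightarrow> Q i \<in> cat_ob D"
    and H2: "\<And>i. i < n \<Longrightarrow> c i \<in> cat_hom D (cQx A' Q i) (Q (Suc i))"
    and H3: "\<And>X u. X \<in> cat_ob D \<Longrightarrow> u \<in> cat_hom D (Q n) X \<Longrightarrow>
      cat_comp D u (c (n - 1)) = cat_zero D (cQx A' Q (n - 1)) X \<Longrightarrow> u = cat_zero D (Q n) X"
    and H4: "\<And>X i u. X \<in> cat_ob D \<Longrightarrow> i < n \<Longrightarrow> u \<in> cat_hom D (cQx A' Q i) X \<Longrightarrow>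
      (cat_comp D u (cfx f c i) = cat_zero D (csx A A' Q i) X \<longleftrightarrow>
      (\<exists>v \<in> cat_hom D (Q (Suc i)) X. u = cat_comp D v (c i)))"
    by auto
  have G1: "\<forall>i \<in> {1..n}. B i \<in> cat_ob D \<and> b i \<in> cat_hom D (kBx n A' A B (Suc i)) (B i)"
  proof
    fix i assume i: "i \<in> {1..n}"
    have e1: "kBx n A' A B (Suc i) = cQx A' Q (n - i)" using i False by (auto simp: kBx_def cQx_def B_def)
    have e2: "B i = Q (Suc (n - i))" using i by (auto simp: B_def Suc_diff_le)
    show "B i \<in> cat_ob D \<and> b i \<in> cat_hom D (kBx n A' A B (Suc i)) (B i)"
      using H1[of "Suc (n - i)"] H2[of "n - i"] i e1 e2 unfolding b_def by auto
  qed
  have G2: "\<forall>X \<in> cat_ob D. \<forall>u \<in> cat_hom D (B 1) X.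
      cat_comp D u (b 1) = cat_zero D (kBx n A' A B 2) X \<longrightarrow> u = cat_zero D (B 1) X"
  proof (intro ballI impI)
    fix X u assume X: "X \<in> cat_ob D" and u: "u \<in> cat_hom D (B 1) X"
      and z: "cat_comp D u (b 1) = cat_zero D (kBx n A' A B 2) X"
    have e1: "kBx n A' A B 2 = cQx A' Q (n - 1)" using False by (auto simp: kBx_def cQx_def B_def)
    have e2: "B 1 = Q n" by (simp add: B_def)
    show "u = cat_zero D (B 1) X" using H3[of X u] X u z e1 e2 unfolding b_def by simp
  qed
  have G3: "\<forall>X \<in> cat_ob D. \<forall>i \<in> {2..n+1}. \<forall>u \<in> cat_hom D (kBx n A' A B i) X.
      cat_comp D u (kbx n f b i) = cat_zero D (kBx n A' A B (Suc i)) X \<longleftrightarrow>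
      (\<exists>v \<in> cat_hom D (B (i - 1)) X. u = cat_comp D v (b (i - 1)))"
  proof (intro ballI)
    fix X i u assume X: "X \<in> cat_ob D" and i: "i \<in> {2..n+1}" and u: "u \<in> cat_hom D (kBx n A' A B i) X"
    define j where "j = n + 1 - i"
    have j: "j < n" using i unfolding j_def by auto
    have e1: "kBx n A' A B i = cQx A' Q j" using i unfolding j_def by (auto simp: kBx_def cQx_def B_def)
    have e2: "kbx n f b i = cfx f c j" using i unfolding j_def by (auto simp: kbx_def cfx_def b_def)
    have e3: "kBx n A' A B (Suc i) = csx A A' Q j" using i unfolding j_def
      by (auto simp: kBx_def cQx_def csx_def B_def)
    have e4: "B (i - 1) = Q (Suc j)" "b (i - 1) = c j" using i unfolding j_def B_def b_def
      by (auto simp: Suc_diff_le)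
    show "cat_comp D u (kbx n f b i) = cat_zero D (kBx n A' A B (Suc i)) X \<longleftrightarrow>
      (\<exists>v \<in> cat_hom D (B (i - 1)) X. u = cat_comp D v (b (i - 1)))"
      using H4[of X j u] X j u e1 e2 e3 e4 by simp
  qed
  have "is_n_kernel (op_cat D) n A' A f B b"
    unfolding is_n_kernel_pos[OF False] op_simps using G1 G2 G3 by simp
  then show ?thesis using False unfolding B_def b_def by simp
qed

lemma has_cok_to_ker: "has_n_cokernels D n \<Longrightarrow> has_n_kernels (op_cat D) n"
proof -
  assume h: "has_n_cokernels D n"
  show ?thesis unfolding has_n_kernels_def op_simps
  proof (intro ballI)
    fix A A' f assume "A \<in> cat_ob D" "A' \<in> cat_ob D" "f \<in> cat_hom D A' A"
    then obtain Q c where "is_n_cokernel D n A' A f Q c" using h unfolding has_n_cokernels_def by blast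
    then show "\<exists>B b. is_n_kernel (op_cat D) n A A' f B b" by (intro exI) (rule cok_to_ker)
  qed
qed




context preadd
begin

definition wcok where "wcok S T g = (SOME p. weak_cokernel C S T g (fst p) (snd p))"

primrec wch :: "'o \<Rightarrow> 'o \<Rightarrow> 'm \<Rightarrow> nat \<Rightarrow> 'o \<times> 'o \<times> 'm" where
  "wch A A' f 0 = (A, A', f)"
| "wch A A' f (Suc k) = (fst (snd (wch A A' f k)),
     fst (wcok (fst (wch A A' f k)) (fst (snd (wch A A' f k))) (snd (snd (wch A A' f k)))),
     snd (wcok (fst (wch A A' f k)) (fst (snd (wch A A' f k))) (snd (snd (wch A A' f k)))))"

lemma wcok_ex:
  assumes wc: "has_weak_cokernels C" and g: "g \<in> hom S T"
  shows "weak_cokernel C S T g (fst (wcok S T g)) (snd (wcok S T g))"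
proof -
  have "S \<in> ob" "T \<in> ob" using g hom_ob by auto
  then obtain Q c where "weak_cokernel C S T g Q c" using wc g unfolding has_weak_cokernels_def by blast
  then have "\<exists>p. weak_cokernel C S T g (fst p) (snd p)" by (intro exI[of _ "(Q, c)"]) simp
  then show ?thesis unfolding wcok_def by (rule someI_ex)
qed

lemma wch_hom:
  assumes wc: "has_weak_cokernels C" and f: "f \<in> hom A A'"
  shows "snd (snd (wch A A' f k)) \<in> hom (fst (wch A A' f k)) (fst (snd (wch A A' f k)))"
proof (induction k)
  case 0 then show ?case using f by simp
next
  case (Suc k)
  show ?case using wcok_ex[OF wc Suc.IH] unfolding weak_cokernel_def by simp
qed

lemma wch_wc:
  assumes wc: "has_weak_cokernels C" and f: "f \<in> hom A A'"
  shows "weak_cokernel C (fst (wch A A' f k)) (fst (wch A A' f (Suc k))) (snd (snd (wch A A' f k)))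
     (fst (wch A A' f (Suc (Suc k)))) (snd (snd (wch A A' f (Suc k))))"
  using wcok_ex[OF wc wch_hom[OF wc f, of k]] by simp

end



context preadd
begin

lemma main_pos:
  assumes ic: "idempotent_complete C" and wc: "has_weak_cokernels C"
    and nk: "has_n_kernels C n" and n0: "n \<noteq> 0" and f: "f \<in> hom A A'"
  shows "\<exists>Q c. is_n_cokernel C n A A' f Q c"
proof -
  define Ob where "Ob k = fst (wch A A' f k)" for k
  define G where "G k = snd (snd (wch A A' f k))" for k
  have GO: "\<And>k. G k \<in> hom (Ob k) (Ob (Suc k))"
    using wch_hom[OF wc f] unfolding Ob_def G_def by simp
  have WC: "\<And>k. weak_cokernel C (Ob k) (Ob (Suc k)) (G k) (Ob (Suc (Suc k))) (G (Suc k))"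
    using wch_wc[OF wc f] unfolding Ob_def G_def by simp
  have Oob: "\<And>k. Ob k \<in> ob" using GO hom_ob by blast
  have GG: "\<And>k. G (Suc k) \<cdot> G k = Z (Ob k) (Ob (Suc (Suc k)))" using WC unfolding weak_cokernel_def by blast
  have WCu: "\<And>k X u. X \<in> ob \<Longrightarrow> u \<in> hom (Ob (Suc k)) X \<Longrightarrow> u \<cdot> G k = Z (Ob k) X \<Longrightarrow>
      \<exists>v\<in>hom (Ob (Suc (Suc k))) X. u = v \<cdot> G (Suc k)"
    using WC unfolding weak_cokernel_def by blast
  have O0: "Ob 0 = A" "Ob (Suc 0) = A'" "G 0 = f" unfolding Ob_def G_def by simp_all
  obtain B b where K: "is_n_kernel C n (Ob (Suc n)) (Ob (Suc (Suc n))) (G (Suc n)) B b"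
    using nk GO Oob unfolding has_n_kernels_def by blast
  define T where "T i = (if i = Suc n then Ob (Suc n) else B i)" for i
  have K': "(\<forall>i \<in> {1..n}. B i \<in> ob \<and> b i \<in> hom (B i) (kBx n (Ob (Suc n)) (Ob (Suc (Suc n))) B (Suc i))) \<and>
   (\<forall>X \<in> ob. \<forall>u \<in> hom X (B 1).
      b 1 \<cdot> u = Z X (kBx n (Ob (Suc n)) (Ob (Suc (Suc n))) B 2) \<longrightarrow> u = Z X (B 1)) \<and>
   (\<forall>X \<in> ob. \<forall>i \<in> {2..n+1}. \<forall>u \<in> hom X (kBx n (Ob (Suc n)) (Ob (Suc (Suc n))) B i).
      (kbx n (G (Suc n)) b i) \<cdot> u = Z X (kBx n (Ob (Suc n)) (Ob (Suc (Suc n))) B (Suc i)) \<longleftrightarrow>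
      (\<exists>v \<in> hom X (B (i - 1)). u = b (i - 1) \<cdot> v))"
    using K unfolding is_n_kernel_pos[OF n0] by simp
  then have K1: "\<And>i. 1 \<le> i \<Longrightarrow> i \<le> n \<Longrightarrow> B i \<in> ob \<and> b i \<in> hom (B i) (kBx n (Ob (Suc n)) (Ob (Suc (Suc n))) B (Suc i))"
    and K2: "\<And>X u. X \<in> ob \<Longrightarrow> u \<in> hom X (B 1) \<Longrightarrow>
      b 1 \<cdot> u = Z X (kBx n (Ob (Suc n)) (Ob (Suc (Suc n))) B 2) \<Longrightarrow> u = Z X (B 1)"
    and K3: "\<And>X i u. X \<in> ob \<Longrightarrow> 2 \<le> i \<Longrightarrow> i \<le> n + 1 \<Longrightarrow> u \<in> hom X (kBx n (Ob (Suc n)) (Ob (Suc (Suc n))) B i) \<Longrightarrow>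
      ((kbx n (G (Suc n)) b i) \<cdot> u = Z X (kBx n (Ob (Suc n)) (Ob (Suc (Suc n))) B (Suc i)) \<longleftrightarrow>
      (\<exists>v \<in> hom X (B (i - 1)). u = b (i - 1) \<cdot> v))"
    by auto
  have Bob: "\<And>i. 1 \<le> i \<Longrightarrow> i \<le> n \<Longrightarrow> B i \<in> ob" using K1 by blast
  have bh: "\<And>i. 1 \<le> i \<Longrightarrow> i \<le> n \<Longrightarrow> b i \<in> hom (B i) (T (Suc i))"
  proof -
    fix i assume i: "1 \<le> i" "i \<le> n"
    have "kBx n (Ob (Suc n)) (Ob (Suc (Suc n))) B (Suc i) = T (Suc i)" using i by (auto simp: kBx_def T_def)
    then show "b i \<in> hom (B i) (T (Suc i))" using K1[OF i] by simp
  qed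
  have mono: "\<And>X u. X \<in> ob \<Longrightarrow> u \<in> hom X (B 1) \<Longrightarrow> b 1 \<cdot> u = Z X (T 2) \<Longrightarrow> u = Z X (B 1)"
  proof -
    fix X u assume a: "X \<in> ob" "u \<in> hom X (B 1)" "b 1 \<cdot> u = Z X (T 2)"
    have "kBx n (Ob (Suc n)) (Ob (Suc (Suc n))) B 2 = T 2" using n0 by (auto simp: kBx_def T_def)
    then show "u = Z X (B 1)" using K2[OF a(1,2)] a(3) by simp
  qed
  have ex1: "\<And>X j u. X \<in> ob \<Longrightarrow> 1 \<le> j \<Longrightarrow> Suc j \<le> n \<Longrightarrow> u \<in> hom X (B (Suc j)) \<Longrightarrow>
      b (Suc j) \<cdot> u = Z X (T (Suc (Suc j))) \<Longrightarrow> \<exists>v\<in>hom X (B j). u = b j \<cdot> v"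
  proof -
    fix X j u assume a: "X \<in> ob" "1 \<le> j" "Suc j \<le> n" "u \<in> hom X (B (Suc j))"
      "b (Suc j) \<cdot> u = Z X (T (Suc (Suc j)))"
    have e: "kBx n (Ob (Suc n)) (Ob (Suc (Suc n))) B (Suc j) = B (Suc j)"
      "kBx n (Ob (Suc n)) (Ob (Suc (Suc n))) B (Suc (Suc j)) = T (Suc (Suc j))"
      "kbx n (G (Suc n)) b (Suc j) = b (Suc j)" using a(2,3) by (auto simp: kBx_def T_def kbx_def)
    show "\<exists>v\<in>hom X (B j). u = b j \<cdot> v" using K3[of X "Suc j" u] a e by simp
  qed
  have ex1': "\<And>j. 1 \<le> j \<Longrightarrow> Suc j \<le> n \<Longrightarrow> b (Suc j) \<cdot> b j = Z (B j) (T (Suc (Suc j)))"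
  proof -
    fix j assume a: "1 \<le> j" "Suc j \<le> n"
    have e: "kBx n (Ob (Suc n)) (Ob (Suc (Suc n))) B (Suc j) = B (Suc j)"
      "kBx n (Ob (Suc n)) (Ob (Suc (Suc n))) B (Suc (Suc j)) = T (Suc (Suc j))"
      "kbx n (G (Suc n)) b (Suc j) = b (Suc j)" using a by (auto simp: kBx_def T_def kbx_def)
    have bj: "b j \<in> hom (B j) (B (Suc j))" using bh[of j] a by (simp add: T_def)
    have Bj: "B j \<in> ob" using Bob a by simp
    have "b j = b j \<cdot> idm (B j)" using bj by simp
    then have "\<exists>v\<in>hom (B j) (B (j - 1 + 1)). b j = b (Suc j - 1) \<cdot> v" using Bj a by auto
    then show "b (Suc j) \<cdot> b j = Z (B j) (T (Suc (Suc j)))"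
      using K3[of "B j" "Suc j" "b j"] a e Bj bj by simp
  qed
  have ex2: "\<And>X u. X \<in> ob \<Longrightarrow> u \<in> hom X (Ob (Suc n)) \<Longrightarrow>
      G (Suc n) \<cdot> u = Z X (Ob (Suc (Suc n))) \<Longrightarrow> \<exists>v\<in>hom X (B n). u = b n \<cdot> v"
  proof -
    fix X u assume a: "X \<in> ob" "u \<in> hom X (Ob (Suc n))" "G (Suc n) \<cdot> u = Z X (Ob (Suc (Suc n)))"
    have e: "kBx n (Ob (Suc n)) (Ob (Suc (Suc n))) B (n + 1) = Ob (Suc n)"
      "kBx n (Ob (Suc n)) (Ob (Suc (Suc n))) B (Suc (n + 1)) = Ob (Suc (Suc n))"
      "kbx n (G (Suc n)) b (n + 1) = G (Suc n)" by (auto simp: kBx_def kbx_def)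
    show "\<exists>v\<in>hom X (B n). u = b n \<cdot> v" using K3[of X "n + 1" u] a e n0 by simp
  qed
  have ex2': "G (Suc n) \<cdot> b n = Z (B n) (Ob (Suc (Suc n)))"
  proof -
    have e: "kBx n (Ob (Suc n)) (Ob (Suc (Suc n))) B (n + 1) = Ob (Suc n)"
      "kBx n (Ob (Suc n)) (Ob (Suc (Suc n))) B (Suc (n + 1)) = Ob (Suc (Suc n))"
      "kbx n (G (Suc n)) b (n + 1) = G (Suc n)" by (auto simp: kBx_def kbx_def)
    have bn: "b n \<in> hom (B n) (Ob (Suc n))" using bh[of n] n0 by (simp add: T_def)
    have Bn: "B n \<in> ob" using Bob n0 by simp
    have "b n = b n \<cdot> idm (B n)" using bn by simp
    then have "\<exists>v\<in>hom (B n) (B n). b n = b n \<cdot> v" using Bn by auto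
    then show ?thesis using K3[of "B n" "n + 1" "b n"] e Bn bn n0 by simp
  qed
  have R: "1 \<le> j \<Longrightarrow> j \<le> n \<Longrightarrow> (\<forall>y\<in>hom (Ob j) (B j). \<forall>Y\<in>hom (Ob (Suc j)) (T (Suc j)).
     b j \<cdot> y = Y \<cdot> G j \<longrightarrow> (\<exists>z\<in>hom (Ob (Suc j)) (B j). b j \<cdot> y = b j \<cdot> (z \<cdot> G j)))" for j
  proof (induction j)
    case 0 then show ?case by simp
  next
    case (Suc j)
    show ?case
    proof (intro ballI impI)
      fix y Y assume y: "y \<in> hom (Ob (Suc j)) (B (Suc j))" and Y: "Y \<in> hom (Ob (Suc (Suc j))) (T (Suc (Suc j)))"
        and eq: "b (Suc j) \<cdot> y = Y \<cdot> G (Suc j)"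
      have bS: "b (Suc j) \<in> hom (B (Suc j)) (T (Suc (Suc j)))" using bh Suc.prems by blast
      have u: "y \<cdot> G j \<in> hom (Ob j) (B (Suc j))" using y GO by blast
      have BSj: "B (Suc j) \<in> ob" using Bob Suc.prems by blast
      have bu: "b (Suc j) \<cdot> (y \<cdot> G j) = Z (Ob j) (T (Suc (Suc j)))"
      proof -
        have "b (Suc j) \<cdot> (y \<cdot> G j) = (b (Suc j) \<cdot> y) \<cdot> G j" by (rule assoc[OF GO y bS])
        also have "\<dots> = (Y \<cdot> G (Suc j)) \<cdot> G j" using eq by simp
        also have "\<dots> = Y \<cdot> (G (Suc j) \<cdot> G j)" by (rule assoc[symmetric, OF GO GO Y])
        also have "\<dots> = Y \<cdot> Z (Ob j) (Ob (Suc (Suc j)))" using GG by simp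
        also have "\<dots> = Z (Ob j) (T (Suc (Suc j)))" using Y Oob by simp
        finally show ?thesis .
      qed
      show "\<exists>z\<in>hom (Ob (Suc (Suc j))) (B (Suc j)). b (Suc j) \<cdot> y = b (Suc j) \<cdot> (z \<cdot> G (Suc j))"
      proof (cases "j = 0")
        case True
        have "y \<cdot> G j = Z (Ob j) (B 1)" using mono[of "Ob j" "y \<cdot> G j"] Oob u bu True by (simp add: numeral_2_eq_2)
        then obtain z where z: "z \<in> hom (Ob (Suc (Suc j))) (B (Suc j))" "y = z \<cdot> G (Suc j)"
          using WCu[of "B (Suc j)" y j] BSj y True by auto
        then show ?thesis by blast
      next
        case False
        have j1: "1 \<le> j" "j \<le> n" "Suc j \<le> n" using False Suc.prems by auto
        obtain y' where y': "y' \<in> hom (Ob j) (B j)" "y \<cdot> G j = b j \<cdot> y'"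
          using ex1[of "Ob j" j "y \<cdot> G j"] j1 Oob u bu by blast
        have TS: "T (Suc j) = B (Suc j)" using j1 by (simp add: T_def)
        have yT: "y \<in> hom (Ob (Suc j)) (T (Suc j))" using y TS by simp
        obtain z' where z': "z' \<in> hom (Ob (Suc j)) (B j)" "b j \<cdot> y' = b j \<cdot> (z' \<cdot> G j)"
          using Suc.IH[OF j1(1,2)] y' yT by metis
        have bj: "b j \<in> hom (B j) (B (Suc j))" using bh[OF j1(1,2)] TS by simp
        define w where "w = b j \<cdot> z'"
        have w: "w \<in> hom (Ob (Suc j)) (B (Suc j))" unfolding w_def using z' bj by blast
        have ywG: "y \<cdot> G j = w \<cdot> G j"
          using y' z' assoc[OF GO z'(1) bj] unfolding w_def by simp
        have nw: "neg (Ob (Suc j)) (B (Suc j)) w \<in> hom (Ob (Suc j)) (B (Suc j))" using w by blast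
        have "(y \<uplus> neg (Ob (Suc j)) (B (Suc j)) w) \<cdot> G j = y \<cdot> G j \<uplus> neg (Ob (Suc j)) (B (Suc j)) w \<cdot> G j"
          by (rule distr[OF GO y nw])
        also have "\<dots> = w \<cdot> G j \<uplus> neg (Ob j) (B (Suc j)) (w \<cdot> G j)"
          using ywG neg_comp_l[OF w GO] by simp
        also have "\<dots> = Z (Ob j) (B (Suc j))" by (rule add_neg[OF comp_hom[OF GO w]])
        finally have "(y \<uplus> neg (Ob (Suc j)) (B (Suc j)) w) \<cdot> G j = Z (Ob j) (B (Suc j))" .
        then obtain z where z: "z \<in> hom (Ob (Suc (Suc j))) (B (Suc j))"
          "y \<uplus> neg (Ob (Suc j)) (B (Suc j)) w = z \<cdot> G (Suc j)"
          using WCu[of "B (Suc j)" "y \<uplus> neg (Ob (Suc j)) (B (Suc j)) w" j] BSj y nw by blast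
        have zG: "z \<cdot> G (Suc j) \<in> hom (Ob (Suc j)) (B (Suc j))" using z GO by blast
        have yy: "y = z \<cdot> G (Suc j) \<uplus> w" using sub_eq[OF y w zG z(2)] .
        have bw: "b (Suc j) \<cdot> w = Z (Ob (Suc j)) (T (Suc (Suc j)))"
        proof -
          have "b (Suc j) \<cdot> w = (b (Suc j) \<cdot> b j) \<cdot> z'" unfolding w_def by (rule assoc[OF z'(1) bj bS])
          also have "\<dots> = Z (B j) (T (Suc (Suc j))) \<cdot> z'" using ex1'[OF j1(1,3)] by simp
          also have "\<dots> = Z (Ob (Suc j)) (T (Suc (Suc j)))" using comp_zero_l[OF z'(1)] hom_ob[OF bS] by simp
          finally show ?thesis .
        qed
        have "b (Suc j) \<cdot> y = b (Suc j) \<cdot> (z \<cdot> G (Suc j)) \<uplus> b (Suc j) \<cdot> w"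
          using yy distl[OF zG w bS] by simp
        also have "\<dots> = b (Suc j) \<cdot> (z \<cdot> G (Suc j))" using bw add_zero_r[OF comp_hom[OF zG bS]] by simp
        finally show ?thesis using z(1) by blast
      qed
    qed
  qed
  have bn: "b n \<in> hom (B n) (Ob (Suc n))" using bh[of n] n0 by (simp add: T_def)
  obtain y where y: "y \<in> hom (Ob n) (B n)" "G n = b n \<cdot> y"
    using ex2[of "Ob n" "G n"] Oob GO GG by blast
  have idT: "idm (Ob (Suc n)) \<in> hom (Ob (Suc n)) (T (Suc n))" using Oob by (auto simp: T_def)
  have Rn: "\<forall>y\<in>hom (Ob n) (B n). \<forall>Y\<in>hom (Ob (Suc n)) (T (Suc n)).
     b n \<cdot> y = Y \<cdot> G n \<longrightarrow> (\<exists>z\<in>hom (Ob (Suc n)) (B n). b n \<cdot> y = b n \<cdot> (z \<cdot> G n))"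
    using R[of n] n0 by simp
  have yy: "b n \<cdot> y = idm (Ob (Suc n)) \<cdot> G n" using idl[OF GO, of n] y(2) by simp
  have "\<exists>z\<in>hom (Ob (Suc n)) (B n). b n \<cdot> y = b n \<cdot> (z \<cdot> G n)"
    using Rn y(1) idT yy by blast
  then obtain z where z: "z \<in> hom (Ob (Suc n)) (B n)" "b n \<cdot> y = b n \<cdot> (z \<cdot> G n)" by blast
  define p where "p = b n \<cdot> z"
  have p: "p \<in> hom (Ob (Suc n)) (Ob (Suc n))" unfolding p_def using z bn by blast
  have pG: "p \<cdot> G n = G n" unfolding p_def using y z assoc[OF GO z(1) bn] by simp
  have Gp: "G (Suc n) \<cdot> p = Z (Ob (Suc n)) (Ob (Suc (Suc n)))"
  proof -
    have "G (Suc n) \<cdot> p = (G (Suc n) \<cdot> b n) \<cdot> z" unfolding p_def by (rule assoc[OF z(1) bn GO])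
    also have "\<dots> = Z (Ob (Suc n)) (Ob (Suc (Suc n)))" using ex2' z(1) Oob by simp
    finally show ?thesis .
  qed
  have idn: "idm (Ob (Suc n)) \<in> hom (Ob (Suc n)) (Ob (Suc n))" using Oob by blast
  have np: "neg (Ob (Suc n)) (Ob (Suc n)) p \<in> hom (Ob (Suc n)) (Ob (Suc n))" using p by blast
  have "(idm (Ob (Suc n)) \<uplus> neg (Ob (Suc n)) (Ob (Suc n)) p) \<cdot> G n
      = idm (Ob (Suc n)) \<cdot> G n \<uplus> neg (Ob (Suc n)) (Ob (Suc n)) p \<cdot> G n" by (rule distr[OF GO idn np])
  also have "\<dots> = G n \<uplus> neg (Ob n) (Ob (Suc n)) (G n)" using neg_comp_l[OF p GO] pG idl[OF GO] by simp
  also have "\<dots> = Z (Ob n) (Ob (Suc n))" by (rule add_neg[OF GO])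
  finally obtain v where v: "v \<in> hom (Ob (Suc (Suc n))) (Ob (Suc n))"
    "idm (Ob (Suc n)) \<uplus> neg (Ob (Suc n)) (Ob (Suc n)) p = v \<cdot> G (Suc n)"
    using WCu[of "Ob (Suc n)" _ n] Oob idn np by blast
  have vG: "v \<cdot> G (Suc n) \<in> hom (Ob (Suc n)) (Ob (Suc n))" using v GO by blast
  have idd: "idm (Ob (Suc n)) = v \<cdot> G (Suc n) \<uplus> p" using sub_eq[OF idn p vG v(2)] .
  have pp: "p \<cdot> p = p"
  proof -
    have "p = idm (Ob (Suc n)) \<cdot> p" using p by simp
    also have "\<dots> = (v \<cdot> G (Suc n)) \<cdot> p \<uplus> p \<cdot> p" using idd distr[OF p vG p] by simp
    also have "(v \<cdot> G (Suc n)) \<cdot> p = v \<cdot> (G (Suc n) \<cdot> p)" by (rule assoc[symmetric, OF p GO v(1)])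
    also have "\<dots> = Z (Ob (Suc n)) (Ob (Suc n))" using Gp v(1) Oob by simp
    finally show ?thesis using add_zero_l[OF comp_hom[OF p p]] by simp
  qed
  obtain E i r where E: "E \<in> ob" "i \<in> hom E (Ob (Suc n))" "r \<in> hom (Ob (Suc n)) E"
    "i \<cdot> r = p" "r \<cdot> i = idm E"
    using ic p pp Oob unfolding idempotent_complete_def by blast
  define Q where "Q k = (if k = n then E else Ob (Suc k))" for k
  define c where "c k = (if k = n - 1 then r \<cdot> G n else G (Suc k))" for k
  have rG: "r \<cdot> G n \<in> hom (Ob n) E" using E GO by blast
  have pi: "p \<cdot> i = i"
  proof -
    have "p \<cdot> i = i \<cdot> (r \<cdot> i)" using E assoc[OF E(2) E(3) E(2)] by simp
    also have "\<dots> = i" using E by simp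
    finally show ?thesis .
  qed
  have Gi: "G (Suc n) \<cdot> i = Z E (Ob (Suc (Suc n)))"
  proof -
    have "G (Suc n) \<cdot> i = G (Suc n) \<cdot> (p \<cdot> i)" using pi by simp
    also have "\<dots> = (G (Suc n) \<cdot> p) \<cdot> i" by (rule assoc[OF E(2) p GO])
    also have "\<dots> = Z E (Ob (Suc (Suc n)))" using Gp E Oob by simp
    finally show ?thesis .
  qed
  have eQx: "\<And>k. k < n \<Longrightarrow> cQx A' Q k = Ob (Suc k)" using O0 by (auto simp: cQx_def Q_def)
  have efx: "\<And>k. k < n \<Longrightarrow> cfx f c k = G k" using O0 by (auto simp: cfx_def c_def)
  have esx: "csx A A' Q k = Ob k" if k: "k < n" for k
  proof (cases k)
    case 0 then show ?thesis using O0 by (simp add: csx_def)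
  next
    case (Suc m) then show ?thesis using O0 k by (auto simp: csx_def cQx_def Q_def)
  qed
  have C1: "\<forall>k \<in> {1..n}. Q k \<in> ob" using E Oob by (auto simp: Q_def)
  have C2: "\<forall>k < n. c k \<in> hom (cQx A' Q k) (Q (Suc k))"
  proof (intro allI impI)
    fix k assume k: "k < n"
    show "c k \<in> hom (cQx A' Q k) (Q (Suc k))"
    proof (cases "k = n - 1")
      case True then have "Suc k = n" using k by simp
      then show ?thesis using eQx[OF k] rG True by (simp add: c_def Q_def)
    next
      case False then have "Suc k \<noteq> n" using k by simp
      then show ?thesis using eQx[OF k] GO False by (simp add: c_def Q_def)
    qed
  qed
  have C3: "\<forall>X \<in> ob. \<forall>u \<in> hom (Q n) X. u \<cdot> c (n - 1) = Z (cQx A' Q (n - 1)) X \<longrightarrow> u = Z (Q n) X"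
  proof (intro ballI impI)
    fix X u assume X: "X \<in> ob" and u: "u \<in> hom (Q n) X" and h: "u \<cdot> c (n - 1) = Z (cQx A' Q (n - 1)) X"
    have uE: "u \<in> hom E X" using u by (simp add: Q_def)
    have Sn: "Suc (n - 1) = n" using n0 by simp
    have "(u \<cdot> r) \<cdot> G n = Z (Ob n) X" using h eQx[of "n - 1"] n0 Sn assoc[OF GO E(3) uE]
      by (simp add: c_def)
    then obtain t where t: "t \<in> hom (Ob (Suc (Suc n))) X" "u \<cdot> r = t \<cdot> G (Suc n)"
      using WCu[of X "u \<cdot> r" n] X uE E by blast
    have "u = u \<cdot> (r \<cdot> i)" using E uE by simp
    also have "\<dots> = (u \<cdot> r) \<cdot> i" by (rule assoc[OF E(2) E(3) uE])
    also have "\<dots> = t \<cdot> (G (Suc n) \<cdot> i)" using t assoc[OF E(2) GO t(1)] by simp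
    also have "\<dots> = Z E X" using Gi t E by simp
    finally show "u = Z (Q n) X" by (simp add: Q_def)
  qed
  have C4: "\<forall>X \<in> ob. \<forall>k < n. \<forall>u \<in> hom (cQx A' Q k) X.
      u \<cdot> cfx f c k = Z (csx A A' Q k) X \<longleftrightarrow> (\<exists>v \<in> hom (Q (Suc k)) X. u = v \<cdot> c k)"
  proof (intro ballI allI impI)
    fix X k u assume X: "X \<in> ob" and k: "k < n" and u0: "u \<in> hom (cQx A' Q k) X"
    have u: "u \<in> hom (Ob (Suc k)) X" using u0 eQx[OF k] by simp
    show "u \<cdot> cfx f c k = Z (csx A A' Q k) X \<longleftrightarrow> (\<exists>v \<in> hom (Q (Suc k)) X. u = v \<cdot> c k)"
      unfolding efx[OF k] esx[OF k]
    proof (cases "k = n - 1")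
      case True
      then have Sk: "Suc k = n" using k by simp
      show "u \<cdot> G k = Z (Ob k) X \<longleftrightarrow> (\<exists>v \<in> hom (Q (Suc k)) X. u = v \<cdot> c k)"
      proof
        assume h: "u \<cdot> G k = Z (Ob k) X"
        then obtain w where w: "w \<in> hom (Ob (Suc (Suc k))) X" "u = w \<cdot> G (Suc k)"
          using WCu[OF X u] by blast
        have wn: "w \<in> hom (Ob (Suc n)) X" using w Sk by simp
        have "u = w \<cdot> G n" using w Sk by simp
        also have "\<dots> = w \<cdot> (p \<cdot> G n)" using pG by simp
        also have "\<dots> = w \<cdot> ((i \<cdot> r) \<cdot> G n)" using E by simp
        also have "\<dots> = w \<cdot> (i \<cdot> (r \<cdot> G n))" using assoc[OF GO E(3) E(2)] by simp
        also have "\<dots> = (w \<cdot> i) \<cdot> (r \<cdot> G n)" by (rule assoc[OF rG E(2) wn])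
        finally have "u = (w \<cdot> i) \<cdot> c k" using True by (simp add: c_def)
        moreover have "w \<cdot> i \<in> hom (Q (Suc k)) X" using wn E Sk by (auto simp: Q_def)
        ultimately show "\<exists>v \<in> hom (Q (Suc k)) X. u = v \<cdot> c k" by blast
      next
        assume "\<exists>v \<in> hom (Q (Suc k)) X. u = v \<cdot> c k"
        then obtain v where v: "v \<in> hom E X" "u = v \<cdot> (r \<cdot> G n)" using True Sk by (auto simp: Q_def c_def)
        have rGk: "r \<cdot> G (Suc k) \<in> hom (Ob (Suc k)) E" using rG Sk by simp
        have r2: "r \<in> hom (Ob (Suc (Suc k))) E" using E(3) Sk by simp
        have "u \<cdot> G k = (v \<cdot> (r \<cdot> G (Suc k))) \<cdot> G k" using v Sk by simp
        also have "\<dots> = v \<cdot> ((r \<cdot> G (Suc k)) \<cdot> G k)" by (rule assoc[symmetric, OF GO rGk v(1)])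
        also have "\<dots> = v \<cdot> (r \<cdot> (G (Suc k) \<cdot> G k))" using assoc[OF GO GO r2] by simp
        also have "\<dots> = v \<cdot> (r \<cdot> Z (Ob k) (Ob (Suc (Suc k))))" using GG[of k] by simp
        also have "\<dots> = v \<cdot> Z (Ob k) E" using r2 Oob by simp
        also have "\<dots> = Z (Ob k) X" using v(1) Oob by simp
        finally show "u \<cdot> G k = Z (Ob k) X" .
      qed
    next
      case False
      have ck: "c k = G (Suc k)" "Q (Suc k) = Ob (Suc (Suc k))" using False k by (auto simp: c_def Q_def)
      show "u \<cdot> G k = Z (Ob k) X \<longleftrightarrow> (\<exists>v \<in> hom (Q (Suc k)) X. u = v \<cdot> c k)"
      proof
        assume "u \<cdot> G k = Z (Ob k) X" then show "\<exists>v \<in> hom (Q (Suc k)) X. u = v \<cdot> c k"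
          using WCu[OF X u] ck by simp
      next
        assume "\<exists>v \<in> hom (Q (Suc k)) X. u = v \<cdot> c k"
        then obtain v where v: "v \<in> hom (Ob (Suc (Suc k))) X" "u = v \<cdot> G (Suc k)" using ck by auto
        have "u \<cdot> G k = v \<cdot> (G (Suc k) \<cdot> G k)" using v assoc[OF GO GO v(1)] by simp
        also have "\<dots> = Z (Ob k) X" using GG v Oob by simp
        finally show "u \<cdot> G k = Z (Ob k) X" .
      qed
    qed
  qed
  have "is_n_cokernel C n A A' f Q c"
    unfolding is_n_cokernel_pos[OF n0] using C1 C2 C3 C4 by blast
  then show ?thesis by blast
qed

end



context preadd
begin

lemma main_zero:
  assumes ic: "idempotent_complete C" and wc: "has_weak_cokernels C"
    and nk: "has_n_kernels C 0" and f: "f \<in> hom A A'"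
  shows "\<exists>Q c. is_n_cokernel C 0 A A' f Q c"
proof -
  have AA: "A \<in> ob" "A' \<in> ob" using f hom_ob by auto
  obtain Q0 c0 where W: "weak_cokernel C A A' f Q0 c0" using wc f AA unfolding has_weak_cokernels_def by blast
  have c0: "c0 \<in> hom A' Q0" "Q0 \<in> ob" "c0 \<cdot> f = Z A Q0" using W unfolding weak_cokernel_def by auto
  have Wu: "\<And>X u. X \<in> ob \<Longrightarrow> u \<in> hom A' X \<Longrightarrow> u \<cdot> f = Z A X \<Longrightarrow> \<exists>v\<in>hom Q0 X. u = v \<cdot> c0"
    using W unfolding weak_cokernel_def by blast
  obtain B b where "is_n_kernel C 0 A' Q0 c0 B b" using nk c0 AA unfolding has_n_kernels_def by blast
  then obtain e where K: "B 0 \<in> ob" "cat_mono C (B 0) Q0 (b 0)" "split_epi C A' (B 0) e" "c0 = b 0 \<cdot> e"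
    unfolding is_n_kernel_def by auto
  define B0 where "B0 = B 0"
  define b0 where "b0 = b 0"
  have b0: "b0 \<in> hom B0 Q0" and mono: "\<And>X u v. X \<in> ob \<Longrightarrow> u \<in> hom X B0 \<Longrightarrow> v \<in> hom X B0 \<Longrightarrow> b0 \<cdot> u = b0 \<cdot> v \<Longrightarrow> u = v"
    using K(2) unfolding cat_mono_def B0_def b0_def by auto
  obtain s where e: "e \<in> hom A' B0" and s: "s \<in> hom B0 A'" "e \<cdot> s = idm B0"
    using K(3) unfolding split_epi_def B0_def by auto
  have c0e: "c0 = b0 \<cdot> e" using K(4) unfolding b0_def by simp
  have B0: "B0 \<in> ob" using K(1) unfolding B0_def by simp
  have ef: "e \<cdot> f = Z A B0"
  proof -
    have "b0 \<cdot> (e \<cdot> f) = (b0 \<cdot> e) \<cdot> f" by (rule assoc[OF f e b0])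
    also have "\<dots> = Z A Q0" using c0 c0e by simp
    also have "\<dots> = b0 \<cdot> Z A B0" using b0 AA by simp
    finally show ?thesis using mono[of A "e \<cdot> f" "Z A B0"] AA B0 f e by blast
  qed
  define se where "se = s \<cdot> e"
  have se: "se \<in> hom A' A'" unfolding se_def using s e by blast
  define q where "q = idm A' \<uplus> neg A' A' se"
  have idA: "idm A' \<in> hom A' A'" using AA by blast
  have nse: "neg A' A' se \<in> hom A' A'" using se by blast
  have q: "q \<in> hom A' A'" unfolding q_def using idA nse by blast
  have eq: "e \<cdot> q = Z A' B0"
  proof -
    have "e \<cdot> q = e \<cdot> idm A' \<uplus> e \<cdot> neg A' A' se" unfolding q_def by (rule distl[OF idA nse e])
    also have "\<dots> = e \<uplus> neg A' B0 (e \<cdot> se)" using neg_comp_r[OF se e] e by simp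
    also have "e \<cdot> se = (e \<cdot> s) \<cdot> e" unfolding se_def by (rule assoc[OF e s(1) e])
    also have "\<dots> = e" using s e by simp
    finally show ?thesis using add_neg[OF e] by simp
  qed
  have qq: "q \<cdot> q = q"
  proof -
    have "q \<cdot> q = idm A' \<cdot> q \<uplus> neg A' A' se \<cdot> q" using distr[OF q idA nse] by (simp only: q_def[symmetric])
    also have "\<dots> = q \<uplus> neg A' A' (se \<cdot> q)" using neg_comp_l[OF se q] q by simp
    also have "se \<cdot> q = s \<cdot> (e \<cdot> q)" unfolding se_def by (rule assoc[symmetric, OF q e s(1)])
    also have "\<dots> = Z A' A'" using eq s AA by simp
    finally show ?thesis using q AA by simp
  qed
  obtain K k p where Kk: "K \<in> ob" "k \<in> hom K A'" "p \<in> hom A' K" "k \<cdot> p = q" "p \<cdot> k = idm K"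
    using ic q qq AA unfolding idempotent_complete_def by blast
  have pf: "p \<cdot> f \<in> hom A K" using Kk f by blast
  have fq: "f = k \<cdot> (p \<cdot> f)"
  proof -
    have "k \<cdot> (p \<cdot> f) = q \<cdot> f" using assoc[OF f Kk(3) Kk(2)] Kk by simp
    also have "\<dots> = idm A' \<cdot> f \<uplus> neg A' A' se \<cdot> f" unfolding q_def by (rule distr[OF f idA nse])
    also have "\<dots> = f \<uplus> neg A A' (se \<cdot> f)" using neg_comp_l[OF se f] f by simp
    also have "se \<cdot> f = s \<cdot> (e \<cdot> f)" unfolding se_def by (rule assoc[symmetric, OF f e s(1)])
    also have "\<dots> = Z A A'" using ef s AA by simp
    finally show ?thesis using AA f by simp
  qed
  have ek: "e \<cdot> k = Z K B0"
  proof -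
    have "k = k \<cdot> (p \<cdot> k)" using Kk by simp
    also have "\<dots> = q \<cdot> k" using assoc[OF Kk(2) Kk(3) Kk(2)] Kk by simp
    finally have "e \<cdot> k = (e \<cdot> q) \<cdot> k" using assoc[OF Kk(2) q e] by simp
    also have "\<dots> = Z K B0" using eq Kk B0 by simp
    finally show ?thesis .
  qed
  have epi: "cat_epi C A K (p \<cdot> f)"
    unfolding cat_epi_def
  proof (intro conjI ballI impI)
    show "p \<cdot> f \<in> hom A K" by (rule pf)
  next
    fix X u v assume X: "X \<in> ob" and u: "u \<in> hom K X" and v: "v \<in> hom K X" and h: "u \<cdot> (p \<cdot> f) = v \<cdot> (p \<cdot> f)"
    define w where "w = u \<uplus> neg K X v"
    have nv: "neg K X v \<in> hom K X" using v by blast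
    have w: "w \<in> hom K X" unfolding w_def using u nv by blast
    have "w \<cdot> (p \<cdot> f) = u \<cdot> (p \<cdot> f) \<uplus> neg K X v \<cdot> (p \<cdot> f)" unfolding w_def by (rule distr[OF pf u nv])
    also have "\<dots> = v \<cdot> (p \<cdot> f) \<uplus> neg A X (v \<cdot> (p \<cdot> f))" using h neg_comp_l[OF v pf] by simp
    also have "\<dots> = Z A X" by (rule add_neg[OF comp_hom[OF pf v]])
    finally have "(w \<cdot> p) \<cdot> f = Z A X" using assoc[OF f Kk(3) w] by simp
    then obtain t where t: "t \<in> hom Q0 X" "w \<cdot> p = t \<cdot> c0" using Wu[of X "w \<cdot> p"] X w Kk by blast
    have "w = w \<cdot> (p \<cdot> k)" using Kk w by simp
    also have "\<dots> = (w \<cdot> p) \<cdot> k" by (rule assoc[OF Kk(2) Kk(3) w])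
    also have "\<dots> = (t \<cdot> (b0 \<cdot> e)) \<cdot> k" using t c0e by simp
    also have "\<dots> = (t \<cdot> b0) \<cdot> (e \<cdot> k)" using assoc[OF e b0 t(1)] assoc[OF Kk(2) e comp_hom[OF b0 t(1)]] by simp
    also have "\<dots> = Z K X" using ek comp_hom[OF b0 t(1)] Kk by simp
    finally have "w = Z K X" .
    then show "u = v" using sub_zero[OF u v] unfolding w_def by simp
  qed
  have sm: "split_mono C K A' k" unfolding split_mono_def using Kk by blast
  have "is_n_cokernel C 0 A A' f (\<lambda>_. K) (\<lambda>_. p \<cdot> f)"
    unfolding is_n_cokernel_def using Kk(1) epi sm fq by auto
  then show ?thesis by blast
qed

lemma main:
  assumes ic: "idempotent_complete C" and wc: "has_weak_cokernels C"
    and nk: "has_n_kernels C n"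
  shows "has_n_cokernels C n"
  unfolding has_n_cokernels_def
proof (intro ballI)
  fix A A' f assume "A \<in> ob" "A' \<in> ob" "f \<in> hom A A'"
  then show "\<exists>Q c. is_n_cokernel C n A A' f Q c"
    using main_zero[OF ic wc] main_pos[OF ic wc] nk by (cases "n = 0") auto
qed

end

theorem theorem1:
  fixes C :: "('o, 'm) precat" and n :: nat
  assumes "preadditive C"
    and "idempotent_complete C"
    and "has_weak_kernels C"
    and "has_weak_cokernels C"
  shows "has_n_kernels C n \<longleftrightarrow> has_n_cokernels C n"
proof
  interpret P: preadd C by (unfold_locales) (rule assms(1))
  show "has_n_kernels C n \<Longrightarrow> has_n_cokernels C n" using P.main assms(2,4) by blast
next
  interpret P: preadd C by (unfold_locales) (rule assms(1))
  interpret Q: preadd "op_cat C" by (unfold_locales) (rule P.preadditive_op)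
  assume h: "has_n_cokernels C n"
  have "has_n_kernels (op_cat C) n" using h by (rule has_cok_to_ker)
  then have "has_n_cokernels (op_cat C) n"
    using Q.main idempotent_complete_op[OF assms(2)] has_weak_cokernels_op[OF assms(3)] by blast
  then have "has_n_kernels (op_cat (op_cat C)) n" by (rule has_cok_to_ker)
  then show "has_n_kernels C n" by simp
qed


end
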